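(* If $D$ is a maximum independent set in a simple graph $G$, then $G$ has a matching that covers every vertex of $V(G)-D$. *)

theory Defs
  imports Main
begin

definition simple_graph :: "'a set \<Rightarrow> ('a \<Rightarrow> 'a \<Rightarrow> bool) \<Rightarrow> bool" where
  "simple_graph V E \<longleftrightarrow> finite V \<and> (\<forall>u v. E u v \<longrightarrow> u \<in> V \<and> v \<in> V)
     \<and> (\<forall>u v. E u v \<longrightarrow> E v u) \<and> (\<forall>v. \<not> E v v)"

definition independent_set :: "'a set \<Rightarrow> ('a \<Rightarrow> 'a \<Rightarrow> bool) \<Rightarrow> 'a set \<Rightarrow> bool" where
  "independent_set V E D \<longleftrightarrow> D \<subseteq> V \<and> (\<forall>u\<in>D. \<forall>v\<in>D. \<not> E u v)"

definition maximum_independent_set :: "'a set \<Rightarrow> ('a \<Rightarrow> 'a \<Rightarrow> bool) \<Rightarrow> 'a set \<Rightarrow> bool" where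
  "maximum_independent_set V E D \<longleftrightarrow> independent_set V E D
     \<and> (\<forall>D'. independent_set V E D' \<longrightarrow> card D' \<le> card D)"

definition edges :: "('a \<Rightarrow> 'a \<Rightarrow> bool) \<Rightarrow> 'a set set" where
  "edges E = {{u, v} | u v. E u v}"

definition matching :: "('a \<Rightarrow> 'a \<Rightarrow> bool) \<Rightarrow> 'a set set \<Rightarrow> bool" where
  "matching E M \<longleftrightarrow> M \<subseteq> edges E \<and> (\<forall>e1\<in>M. \<forall>e2\<in>M. e1 \<noteq> e2 \<longrightarrow> e1 \<inter> e2 = {})"

definition covers :: "'a set set \<Rightarrow> 'a set \<Rightarrow> bool" where
  "covers M S \<longleftrightarrow> S \<subseteq> \<Union> M"

end

theory Submission
  imports Defs
begin

definition restr :: "('a \<Rightarrow> 'a \<Rightarrow> bool) \<Rightarrow> 'a set \<Rightarrow> 'a \<Rightarrow> 'a \<Rightarrow> bool" where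
  "restr E W = (\<lambda>u v. E u v \<and> u \<in> W \<and> v \<in> W)"

lemma restr_simple: "simple_graph V E \<Longrightarrow> W \<subseteq> V \<Longrightarrow> simple_graph W (restr E W)"
  unfolding simple_graph_def restr_def by (auto intro: finite_subset)

lemma restr_indep: "W \<subseteq> V \<Longrightarrow> independent_set W (restr E W) S \<longleftrightarrow> S \<subseteq> W \<and> independent_set V E S"
proof -
  assume WV: "W \<subseteq> V"
  show ?thesis
  proof
    assume "independent_set W (restr E W) S"
    then have "S \<subseteq> W" "\<And>u v. u \<in> S \<Longrightarrow> v \<in> S \<Longrightarrow> \<not> restr E W u v"
      unfolding independent_set_def by blast+
    then show "S \<subseteq> W \<and> independent_set V E S"
      unfolding independent_set_def restr_def using WV by blast
  next
    assume "S \<subseteq> W \<and> independent_set V E S"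
    then have "S \<subseteq> W" "\<And>u v. u \<in> S \<Longrightarrow> v \<in> S \<Longrightarrow> \<not> E u v"
      unfolding independent_set_def by blast+
    then show "independent_set W (restr E W) S"
      unfolding independent_set_def restr_def by blast
  qed
qed

lemma restr_max:
  assumes "W \<subseteq> V" "D0 \<subseteq> W" "independent_set V E D0"
    "\<And>S. S \<subseteq> W \<Longrightarrow> independent_set V E S \<Longrightarrow> card S \<le> card D0"
  shows "maximum_independent_set W (restr E W) D0"
  using assms unfolding maximum_independent_set_def by (auto simp: restr_indep[OF assms(1)])

lemma edges_restr: "e \<in> edges (restr E W) \<Longrightarrow> e \<in> edges E \<and> e \<subseteq> W"
  unfolding edges_def restr_def by auto

lemma matching_restr: "matching (restr E W) M \<Longrightarrow> matching E M \<and> \<Union>M \<subseteq> W"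
proof -
  assume m: "matching (restr E W) M"
  have sub: "M \<subseteq> edges (restr E W)" using m unfolding matching_def by (rule conjunct1)
  have dis: "\<forall>e1\<in>M. \<forall>e2\<in>M. e1 \<noteq> e2 \<longrightarrow> e1 \<inter> e2 = {}" using m unfolding matching_def by (rule conjunct2)
  have "M \<subseteq> edges E"
  proof
    fix e assume "e \<in> M"
    then have "e \<in> edges (restr E W)" using sub by (rule subsetD[rotated])
    then show "e \<in> edges E" by (rule conjunct1[OF edges_restr])
  qed
  moreover have "\<Union>M \<subseteq> W"
  proof
    fix x assume "x \<in> \<Union>M"
    then obtain e where e: "e \<in> M" "x \<in> e" by (rule UnionE)
    have "e \<in> edges (restr E W)" using sub e(1) by (rule subsetD)
    then have "e \<subseteq> W" by (rule conjunct2[OF edges_restr])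
    then show "x \<in> W" using e(2) by (rule subsetD)
  qed
  ultimately show ?thesis using dis unfolding matching_def by simp
qed

lemma matching_union:
  assumes a: "matching E M1" and b: "matching E M2" and c: "\<Union>M1 \<inter> \<Union>M2 = {}"
  shows "matching E (M1 \<union> M2)"
proof -
  have a1: "M1 \<subseteq> edges E" and a2: "\<forall>e1\<in>M1. \<forall>e2\<in>M1. e1 \<noteq> e2 \<longrightarrow> e1 \<inter> e2 = {}"
    using a unfolding matching_def by simp_all
  have b1: "M2 \<subseteq> edges E" and b2: "\<forall>e1\<in>M2. \<forall>e2\<in>M2. e1 \<noteq> e2 \<longrightarrow> e1 \<inter> e2 = {}"
    using b unfolding matching_def by simp_all
  have cross: "e1 \<inter> e2 = {}" if "e1 \<in> M1" "e2 \<in> M2" for e1 e2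
  proof -
    have "e1 \<subseteq> \<Union>M1" using that(1) by (rule Union_upper)
    moreover have "e2 \<subseteq> \<Union>M2" using that(2) by (rule Union_upper)
    ultimately have "e1 \<inter> e2 \<subseteq> \<Union>M1 \<inter> \<Union>M2" by (rule Int_mono)
    then show ?thesis using c by simp
  qed
  have "\<forall>e1\<in>M1 \<union> M2. \<forall>e2\<in>M1 \<union> M2. e1 \<noteq> e2 \<longrightarrow> e1 \<inter> e2 = {}"
  proof (intro ballI impI)
    fix e1 e2 assume e1: "e1 \<in> M1 \<union> M2" and e2: "e2 \<in> M1 \<union> M2" and ne: "e1 \<noteq> e2"
    show "e1 \<inter> e2 = {}"
    proof (cases "e1 \<in> M1")
      case True
      show ?thesis
      proof (cases "e2 \<in> M1")
        case True2: True
        then show ?thesis using a2 True ne by simp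
      next
        case False
        then have "e2 \<in> M2" using e2 by simp
        then show ?thesis using cross True by simp
      qed
    next
      case False
      then have e1M2: "e1 \<in> M2" using e1 by simp
      show ?thesis
      proof (cases "e2 \<in> M2")
        case True
        then show ?thesis using b2 e1M2 ne by simp
      next
        case False
        then have "e2 \<in> M1" using e2 by simp
        then have "e2 \<inter> e1 = {}" using cross e1M2 by simp
        then show ?thesis by (simp add: Int_commute)
      qed
    qed
  qed
  moreover have "M1 \<union> M2 \<subseteq> edges E" using a1 b1 by simp
  ultimately show ?thesis unfolding matching_def by simp
qed

lemma matching_single: "E u v \<Longrightarrow> matching E {{u,v}}"
  unfolding matching_def edges_def by blast

lemma main:
  assumes "simple_graph V E" "maximum_independent_set V E D"
  shows "\<exists>M. matching E M \<and> covers M (V - D)"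
  using assms
proof (induction "card V" arbitrary: V E D rule: less_induct)
  case less
  have fin: "finite V" and sym: "\<And>u v. E u v \<Longrightarrow> E v u"
    and inV: "\<And>u v. E u v \<Longrightarrow> u\<in>V \<and> v\<in>V"
    using less.prems(1) unfolding simple_graph_def by auto
  have DI: "independent_set V E D" using less.prems(2) unfolding maximum_independent_set_def by blast
  have Dmax: "\<And>S. independent_set V E S \<Longrightarrow> card S \<le> card D"
    using less.prems(2) unfolding maximum_independent_set_def by blast
  have DV: "D \<subseteq> V" and Dind: "\<And>x y. x\<in>D \<Longrightarrow> y\<in>D \<Longrightarrow> \<not> E x y"
    using DI unfolding independent_set_def by blast+
  have finD: "finite D" using finite_subset[OF DV fin] .
  show ?case
  proof (cases "V - D = {}")
    case True
    then show ?thesis by (intro exI[of _ "{}"]) (auto simp: covers_def matching_def)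
  next
    case nonempty: False
    show ?thesis
    proof (cases "\<exists>u v. u \<in> V - D \<and> v \<in> V - D \<and> E u v")
      case True
      then obtain u v where uv: "u \<in> V-D" "v \<in> V-D" "E u v" by blast
      define W where "W = V - {u,v}"
      have WV: "W \<subseteq> V" by (auto simp: W_def)
      have cardW: "card W < card V" using uv fin unfolding W_def by (intro psubset_card_mono) auto
      have "maximum_independent_set W (restr E W) D"
        apply (rule restr_max[OF WV])
        using uv DV DI Dmax W_def by auto
      then obtain M where M: "matching (restr E W) M" "covers M (W - D)"
        using less.hyps[OF cardW restr_simple[OF less.prems(1) WV]] by blast
      have "matching E (M \<union> {{u,v}})"
        apply (rule matching_union)
        using matching_restr[OF M(1)] matching_single[of E u v, OF uv(3)] W_def by auto
      moreover have "covers (M \<union> {{u,v}}) (V - D)"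
        using M(2) unfolding covers_def W_def by auto
      ultimately show ?thesis by blast
    next
      case False
      define A where "A = V - D"
      hence Aind: "\<And>x y. x \<in> A \<Longrightarrow> y \<in> A \<Longrightarrow> \<not>E x y" using False by blast
      define N where "N X = {d\<in>D. \<exists>x\<in>X. E x d}" for X
      have ND: "N X \<subseteq> D" for X unfolding N_def by auto
      have finN: "finite (N X)" for X using finite_subset[OF ND finD] .
      have AV: "A \<subseteq> V" and AD: "A \<inter> D = {}" unfolding A_def by auto
      have finA: "finite A" using finite_subset[OF AV fin] .
      have hall: "card X \<le> card (N X)" if "X \<subseteq> A" for X
      proof -
        let ?S = "X \<union> (D - N X)"
        have key: "\<not> E x d \<and> \<not> E d x" if "x\<in>X" "d\<in>D - N X" for x d
        proof -
          have "\<not> E x d" using that unfolding N_def by blast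
          then show ?thesis using sym by blast
        qed
        have XI: "\<And>p q. p \<in> X \<Longrightarrow> q \<in> X \<Longrightarrow> \<not> E p q" using Aind that by blast
        have DI': "\<And>p q. p \<in> D - N X \<Longrightarrow> q \<in> D - N X \<Longrightarrow> \<not> E p q" using Dind by blast
        have "independent_set V E ?S"
          unfolding independent_set_def
        proof (intro conjI ballI)
          show "?S \<subseteq> V" using that AV DV by blast
          fix p q assume p: "p \<in> ?S" and q: "q \<in> ?S"
          show "\<not> E p q" using p q key XI DI' by blast
        qed
        then have "card ?S \<le> card D" by (rule Dmax)
        moreover have "card ?S = card X + card (D - N X)"
          apply (rule card_Un_disjoint)
            apply (rule finite_subset[OF that finA])
           apply (simp add: finD)
          using that AD by blast
        moreover have "card (D - N X) = card D - card (N X)"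
          by (rule card_Diff_subset[OF finN ND])
        moreover have "card (N X) \<le> card D" by (rule card_mono[OF finD ND])
        ultimately show ?thesis by linarith
      qed
      show ?thesis
      proof (cases "\<exists>X. X \<noteq> {} \<and> X \<subseteq> A \<and> X \<noteq> A \<and> card (N X) \<le> card X")
        case True
        then obtain X where X: "X \<noteq> {}" "X \<subseteq> A" "X \<noteq> A" "card (N X) \<le> card X" by blast
        have cardX: "card (N X) = card X" using hall[OF X(2)] X(4) by linarith
        have finX: "finite X" using finite_subset[OF X(2) finA] .
        define V1 where "V1 = X \<union> N X"
        define V2 where "V2 = (A - X) \<union> (D - N X)"
        have V1V: "V1 \<subseteq> V" unfolding V1_def using X(2) AV ND DV by blast
        have V2V: "V2 \<subseteq> V" unfolding V2_def using AV DV by blast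
        obtain a where a: "a \<in> A" "a \<notin> X" using X(2,3) by blast
        obtain x where x: "x \<in> X" using X(1) by blast
        have c1: "card V1 < card V"
          apply (rule psubset_card_mono[OF fin])
          using V1V a AD ND AV unfolding V1_def by blast
        have c2: "card V2 < card V"
          apply (rule psubset_card_mono[OF fin])
          using V2V x X(2) AD AV unfolding V2_def by blast
        have m1: "maximum_independent_set V1 (restr E V1) (N X)"
        proof (rule restr_max[OF V1V])
          show "N X \<subseteq> V1" unfolding V1_def by auto
          show "independent_set V E (N X)" using ND DV Dind unfolding independent_set_def by blast
          fix S assume S: "S \<subseteq> V1" "independent_set V E S"
          let ?S = "S \<union> (D - N X)"
          have key: "\<not> E s d \<and> \<not> E d s" if "s\<in>S" "d\<in>D - N X" for s d
          proof -
            have "s \<in> X \<or> s \<in> N X" using that(1) S(1) unfolding V1_def by blast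
            then show ?thesis
            proof
              assume "s \<in> X"
              then have "\<not> E s d" using that(2) unfolding N_def by blast
              then show ?thesis using sym by blast
            next
              assume "s \<in> N X"
              then show ?thesis using ND Dind that(2) by blast
            qed
          qed
          have SI: "\<And>p q. p \<in> S \<Longrightarrow> q \<in> S \<Longrightarrow> \<not> E p q" using S(2) unfolding independent_set_def by blast
          have DI': "\<And>p q. p \<in> D - N X \<Longrightarrow> q \<in> D - N X \<Longrightarrow> \<not> E p q" using Dind by blast
          have "independent_set V E ?S"
            unfolding independent_set_def
          proof (intro conjI ballI)
            show "?S \<subseteq> V" using S(1) V1V DV by blast
            fix p q assume p: "p \<in> ?S" and q: "q \<in> ?S"
            show "\<not> E p q" using p q key SI DI' by blast
          qed
          then have "card ?S \<le> card D" by (rule Dmax)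
          moreover have "card ?S = card S + card (D - N X)"
            apply (rule card_Un_disjoint)
              apply (rule finite_subset[OF order_trans[OF S(1) V1V] fin])
             apply (simp add: finD)
            using S(1) X(2) AD unfolding V1_def by blast
          moreover have "card (D - N X) = card D - card (N X)"
            by (rule card_Diff_subset[OF finN ND])
          moreover have "card (N X) \<le> card D" by (rule card_mono[OF finD ND])
          ultimately show "card S \<le> card (N X)" by linarith
        qed
        have m2: "maximum_independent_set V2 (restr E V2) (D - N X)"
        proof (rule restr_max[OF V2V])
          show "D - N X \<subseteq> V2" unfolding V2_def by auto
          show "independent_set V E (D - N X)" using DV Dind unfolding independent_set_def by blast
          fix S assume S: "S \<subseteq> V2" "independent_set V E S"
          let ?S = "S \<union> X"
          have key: "\<not> E x s \<and> \<not> E s x" if "x\<in>X" "s\<in>S" for x s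
          proof -
            have "s \<in> (A - X) \<or> s \<in> (D - N X)" using that(2) S(1) unfolding V2_def by blast
            then show ?thesis
            proof
              assume "s \<in> A - X" then show ?thesis using Aind that(1) X(2) by blast
            next
              assume sN: "s \<in> D - N X"
              have "\<not> E x s" using sN that(1) unfolding N_def by blast
              then show ?thesis using sym by blast
            qed
          qed
          have SI: "\<And>p q. p \<in> S \<Longrightarrow> q \<in> S \<Longrightarrow> \<not> E p q" using S(2) unfolding independent_set_def by blast
          have XI: "\<And>p q. p \<in> X \<Longrightarrow> q \<in> X \<Longrightarrow> \<not> E p q" using Aind X(2) by blast
          have "independent_set V E ?S"
            unfolding independent_set_def
          proof (intro conjI ballI)
            show "?S \<subseteq> V" using S(1) V2V X(2) AV by blast
            fix p q assume p: "p \<in> ?S" and q: "q \<in> ?S"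
            show "\<not> E p q"
              using p q key SI XI by blast
          qed
          then have "card ?S \<le> card D" by (rule Dmax)
          moreover have "card ?S = card S + card X"
            apply (rule card_Un_disjoint)
              apply (rule finite_subset[OF order_trans[OF S(1) V2V] fin])
             apply (rule finX)
            using S(1) X(2) AD unfolding V2_def by blast
          moreover have "card (D - N X) = card D - card (N X)"
            by (rule card_Diff_subset[OF finN ND])
          moreover have "card (N X) \<le> card D" by (rule card_mono[OF finD ND])
          ultimately show "card S \<le> card (D - N X)" using cardX by linarith
        qed
        obtain M1 where M1: "matching (restr E V1) M1" "covers M1 (V1 - N X)"
          using less.hyps[OF c1 restr_simple[OF less.prems(1) V1V] m1] by blast
        obtain M2 where M2: "matching (restr E V2) M2" "covers M2 (V2 - (D - N X))"
          using less.hyps[OF c2 restr_simple[OF less.prems(1) V2V] m2] by blast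
        have disj: "V1 \<inter> V2 = {}" unfolding V1_def V2_def using X(2) AD ND by blast
        have "matching E (M1 \<union> M2)"
          apply (rule matching_union)
          using matching_restr[OF M1(1)] matching_restr[OF M2(1)] disj by blast+
        moreover have "covers (M1 \<union> M2) (V - D)"
        proof -
          have "X \<subseteq> V1 - N X" unfolding V1_def using X(2) AD ND by blast
          moreover have "A - X \<subseteq> V2 - (D - N X)" unfolding V2_def using AD by blast
          ultimately have "A \<subseteq> (V1 - N X) \<union> (V2 - (D - N X))" by blast
          then show ?thesis using M1(2) M2(2) unfolding covers_def A_def by blast
        qed
        ultimately show ?thesis by blast
      next
        case False
        hence surplus: "\<And>X. X \<noteq> {} \<Longrightarrow> X \<subseteq> A \<Longrightarrow> X \<noteq> A \<Longrightarrow> card X < card (N X)"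
          using False by (metis not_le)
        obtain u where u: "u \<in> A" using nonempty A_def by auto
        have "1 \<le> card (N {u})" using hall[of "{u}"] u by auto
        then have "N {u} \<noteq> {}" by auto
        then obtain v where v: "v \<in> D" "E u v" unfolding N_def by auto
        define W where "W = V - {u,v}"
        have WV: "W \<subseteq> V" by (auto simp: W_def)
        have cardW: "card W < card V" using u AV fin unfolding W_def by (intro psubset_card_mono) auto
        have cD: "card (D - {v}) = card D - 1" using v(1) by simp
        have mx: "maximum_independent_set W (restr E W) (D - {v})"
        proof (rule restr_max[OF WV])
          show "D - {v} \<subseteq> W" using u AD DV unfolding W_def by auto
          show "independent_set V E (D - {v})" using DV Dind unfolding independent_set_def by blast
          fix S assume S: "S \<subseteq> W" "independent_set V E S"
          define X where "X = S \<inter> A"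
          define Y where "Y = S - A"
          have SXY: "S = X \<union> Y" and XY: "X \<inter> Y = {}" unfolding X_def Y_def by auto
          have finS: "finite S" using finite_subset[OF order_trans[OF S(1) WV] fin] .
          have finX: "finite X" unfolding X_def using finS by simp
          have finY: "finite Y" unfolding Y_def using finS by simp
          have cS: "card S = card X + card Y" unfolding SXY
            by (rule card_Un_disjoint[OF finX finY XY])
          have YD: "Y \<subseteq> D - insert v (N X)"
          proof
            fix y assume y: "y \<in> Y"
            have yS: "y \<in> S" and yA: "y \<notin> A" using y unfolding Y_def by auto
            have yW: "y \<in> W" using yS S(1) by blast
            have yD: "y \<in> D" using yW yA unfolding W_def A_def by blast
            have yv: "y \<noteq> v" using yW unfolding W_def by blast
            have "y \<notin> N X"
            proof
              assume "y \<in> N X"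
              then obtain x where "x \<in> X" "E x y" unfolding N_def by blast
              then show False using yS S(2) unfolding X_def independent_set_def by blast
            qed
            then show "y \<in> D - insert v (N X)" using yD yv by blast
          qed
          have insD: "insert v (N X) \<subseteq> D" using v(1) ND by blast
          have cY: "card Y \<le> card D - card (insert v (N X))"
            using card_mono[OF _ YD] card_Diff_subset[OF _ insD] finD finN by auto
          have cI: "card (insert v (N X)) \<le> card D" by (rule card_mono[OF finD insD])
          show "card S \<le> card (D - {v})"
          proof (cases "X = {}")
            case True
            hence "S \<subseteq> D - {v}" using SXY YD by blast
            then show ?thesis by (rule card_mono[OF finite_Diff[OF finD]])
          next
            case False
            have "X \<noteq> A" using u S(1) unfolding X_def W_def by blast
            hence "card X < card (N X)" using surplus[OF False] X_def by blast
            moreover have "card (N X) \<le> card (insert v (N X))" using finN by (simp add: card_mono subset_insertI)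
            ultimately show ?thesis using cS cY cI cD by linarith
          qed
        qed
        obtain M where M: "matching (restr E W) M" "covers M (W - (D - {v}))"
          using less.hyps[OF cardW restr_simple[OF less.prems(1) WV] mx] by blast
        have "matching E (M \<union> {{u,v}})"
          apply (rule matching_union)
          using matching_restr[OF M(1)] matching_single[of E u v, OF v(2)] W_def by auto
        moreover have "covers (M \<union> {{u,v}}) (V - D)"
          using M(2) unfolding covers_def W_def by auto
        ultimately show ?thesis by blast
      qed
    qed
  qed
qed

theorem mainTheorem10:
  fixes V :: "'a set" and E :: "'a \<Rightarrow> 'a \<Rightarrow> bool" and D :: "'a set"
  assumes "simple_graph V E"
    and "maximum_independent_set V E D"
  shows "\<exists>M. matching E M \<and> covers M (V - D)"
  using main[OF assms] .

end
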